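(* Under the Lyapunov condition, for every $x,y\in\mathbb{R}$, \[ \lim_{n\to\infty}\left|\mathbb{P}\Big(\bigcap_{k=1}^{n-1}\{x<|\lambda^{(n)}_k|\le \mathfrak{b}_n y+\mathfrak{a}_n\}\Big)-\mathbb{P}\Big(\bigcap_{k=0}^{n-1}\{x<|\lambda^{(n)}_k|\le \mathfrak{b}_n y+\mathfrak{a}_n\}\Big)\right|=0. \]
   Context: Lyapunov condition: $(\xi_j)_{j\in\mathbb{N}_0}$ is a sequence of i.i.d. non-degenerate real random variables on a probability space $(\Omega,\mathcal{F},\mathbb{P})$ with $\mathbb{E}[\xi_0]=0$, $\mathbb{E}[\xi_0^2]=1$, and there is $\delta>0$ with $\mathbb{E}[|\xi_0|^{2+\delta}]<\infty$. With $\omega_n=\exp(2\pi\mathsf{i}/n)$, $\lambda^{(n)}_k=\sum_{j=0}^{n-1}\xi_j\omega_n^{kj}$. $\mathfrak{a}_n=\sqrt{n\ln(n/2)}$, $\mathfrak{b}_n=\frac12\sqrt{n/\ln(n/2)}$ for $n\ge3$. *)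

theory Defs
  imports "HOL-Probability.Probability"
begin

definition dft_coeff :: "(nat \<Rightarrow> 'a \<Rightarrow> real) \<Rightarrow> nat \<Rightarrow> nat \<Rightarrow> 'a \<Rightarrow> complex" where
  "dft_coeff \<xi> n k \<omega> =
     (\<Sum>j<n. complex_of_real (\<xi> j \<omega>) * (exp (2 * pi * \<i> / of_nat n)) ^ (k * j))"

definition frak_a :: "nat \<Rightarrow> real" where
  "frak_a n = sqrt (real n * ln (real n / 2))"

definition frak_b :: "nat \<Rightarrow> real" where
  "frak_b n = (1/2) * sqrt (real n / ln (real n / 2))"

end

theory Submission imports Defs "HOL-Real_Asymp.Real_Asymp" begin

lemma Fint_gen:
  assumes "prob_space M" "f \<in> borel_measurable M" "(a::real) \<le> b"
  shows "measure M {\<omega>\<in>space M. a < f \<omega> \<and> f \<omega> \<le> b} = measure M {\<omega>\<in>space M. f \<omega> \<le> b} - measure M {\<omega>\<in>space M. f \<omega> \<le> a}"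
proof -
  interpret P: prob_space M by fact
  have [measurable]: "f \<in> borel_measurable M" by fact
  have m1: "{\<omega>\<in>space M. f \<omega> \<le> b} \<in> sets M" "{\<omega>\<in>space M. f \<omega> \<le> a} \<in> sets M" by measurable
  have "{\<omega>\<in>space M. a < f \<omega> \<and> f \<omega> \<le> b} = {\<omega>\<in>space M. f \<omega> \<le> b} - {\<omega>\<in>space M. f \<omega> \<le> a}"
    by (simp add: set_eq_iff not_le) blast
  moreover have "measure M ({\<omega>\<in>space M. f \<omega> \<le> b} - {\<omega>\<in>space M. f \<omega> \<le> a}) = measure M {\<omega>\<in>space M. f \<omega> \<le> b} - measure M {\<omega>\<in>space M. f \<omega> \<le> a}"
    by (rule P.finite_measure_Diff[OF m1]) (use assms(3) in auto)
  ultimately show ?thesis by simp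
qed

lemma std_normal_singleton: "measure std_normal_distribution {t} = 0"
proof -
  have "emeasure std_normal_distribution {t} = (\<integral>\<^sup>+ a. ennreal (std_normal_density a) * indicator {t} a \<partial>lborel)"
    by (subst emeasure_density) auto
  also have "\<dots> = 0"
    by (rule nn_integral_null_set) auto
  finally show ?thesis by (simp add: measure_def)
qed

lemma cont_Phi: "isCont (cdf std_normal_distribution) t"
  using finite_borel_measure.isCont_cdf[OF real_distribution.finite_borel_measure_M[OF real_dist_normal_dist]] std_normal_singleton by simp

lemma lim0I:
  fixes g :: "nat \<Rightarrow> real"
  assumes "\<And>\<eta>. \<eta> > 0 \<Longrightarrow> eventually (\<lambda>n. g n < \<eta>) sequentially" "\<And>n. 0 \<le> g n"
  shows "g \<longlonglongrightarrow> 0"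
proof (rule order_tendstoI)
  fix a :: real assume "a < 0" then show "eventually (\<lambda>n. a < g n) sequentially"
    using assms(2) by (intro always_eventually) (auto intro: less_le_trans)
qed (use assms(1) in auto)

lemma dft0: "cmod (dft_coeff \<xi> n 0 \<omega>) = \<bar>\<Sum>j<n. \<xi> j \<omega>\<bar>"
  unfolding dft_coeff_def by (simp flip: of_real_sum)

lemma moments:
  fixes M :: "'a measure" and \<xi> :: "nat \<Rightarrow> 'a \<Rightarrow> real"
  assumes "prob_space M"
    and rv: "\<And>j. \<xi> j \<in> borel_measurable M"
    and ident: "\<And>j. distr M borel (\<xi> j) = distr M borel (\<xi> 0)"
    and mean: "integrable M (\<xi> 0)" "prob_space.expectation M (\<xi> 0) = 0"
    and var: "integrable M (\<lambda>\<omega>. (\<xi> 0 \<omega>)^2)" "prob_space.expectation M (\<lambda>\<omega>. (\<xi> 0 \<omega>)^2) = 1"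
  shows "integrable M (\<lambda>\<omega>. (\<xi> j \<omega>)^2)" "prob_space.expectation M (\<xi> j) = 0"
     "prob_space.variance M (\<xi> j) = 1^2"
proof -
  have [measurable]: "\<xi> j \<in> borel_measurable M" for j by (rule rv)
  have ie: "integrable (distr M borel (\<xi> j)) (\<lambda>t. t^2) = integrable M (\<lambda>\<omega>. (\<xi> j \<omega>)^2)" for j
    by (rule integrable_distr_eq) measurable
  have i2: "integrable M (\<lambda>\<omega>. (\<xi> j \<omega>)^2)" for j
    using ie[of 0] ie[of j] var ident[of j] by simp
  show "integrable M (\<lambda>\<omega>. (\<xi> j \<omega>)^2)" by (rule i2)
  have e: "integral\<^sup>L M (\<lambda>\<omega>. g (\<xi> j \<omega>)) = integral\<^sup>L M (\<lambda>\<omega>. g (\<xi> 0 \<omega>))"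
    if [measurable]: "g \<in> borel_measurable borel" for g :: "real \<Rightarrow> real"
  proof -
    have d: "integral\<^sup>L (distr M borel (\<xi> i)) g = integral\<^sup>L M (\<lambda>\<omega>. g (\<xi> i \<omega>))" for i
      by (rule integral_distr) measurable
    show ?thesis using d[of j] d[of 0] ident[of j] by simp
  qed
  show e0: "prob_space.expectation M (\<xi> j) = 0"
    using e[of "\<lambda>t. t"] mean by simp
  show "prob_space.variance M (\<xi> j) = 1^2"
    using e[of "\<lambda>t. t^2"] var e0 by simp
qed

theorem lemma2p1:
  fixes M :: "'a measure" and \<xi> :: "nat \<Rightarrow> 'a \<Rightarrow> real" and \<delta> x y :: real
  assumes "prob_space M"
    and rv: "\<And>j. \<xi> j \<in> borel_measurable M"
    and indep: "prob_space.indep_vars M (\<lambda>_. borel) \<xi> UNIV"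
    and ident: "\<And>j. distr M borel (\<xi> j) = distr M borel (\<xi> 0)"
    and nondeg: "\<not> (\<exists>c. AE \<omega> in M. \<xi> 0 \<omega> = c)"
    and mean: "integrable M (\<xi> 0)" "prob_space.expectation M (\<xi> 0) = 0"
    and var: "integrable M (\<lambda>\<omega>. (\<xi> 0 \<omega>)^2)" "prob_space.expectation M (\<lambda>\<omega>. (\<xi> 0 \<omega>)^2) = 1"
    and \<delta>: "\<delta> > 0" "integrable M (\<lambda>\<omega>. \<bar>\<xi> 0 \<omega>\<bar> powr (2 + \<delta>))"
  shows "(\<lambda>n. \<bar>measure M {\<omega>\<in>space M. \<forall>k\<in>{1..n-1}.
                 x < cmod (dft_coeff \<xi> n k \<omega>) \<and> cmod (dft_coeff \<xi> n k \<omega>) \<le> frak_b n * y + frak_a n}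
             - measure M {\<omega>\<in>space M. \<forall>k\<in>{0..n-1}.
                 x < cmod (dft_coeff \<xi> n k \<omega>) \<and> cmod (dft_coeff \<xi> n k \<omega>) \<le> frak_b n * y + frak_a n}\<bar>)
         \<longlonglongrightarrow> 0"
proof -
  interpret P: prob_space M by fact
  define S where "S n \<omega> = (\<Sum>i<n. \<xi> i \<omega>)" for n \<omega>
  define Z where "Z n \<omega> = S n \<omega> / sqrt (real n)" for n \<omega>
  define \<Phi> where "\<Phi> = cdf std_normal_distribution"
  define c where "c n = frak_b n * y + frak_a n" for n
  have [measurable]: "\<xi> j \<in> borel_measurable M" for j by (rule rv)
  have [measurable]: "S n \<in> borel_measurable M" for n unfolding S_def[abs_def] by measurable
  have [measurable]: "Z n \<in> borel_measurable M" for n unfolding Z_def[abs_def] by measurable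
  have [measurable]: "dft_coeff \<xi> n k \<in> borel_measurable M" for n k
    unfolding dft_coeff_def[abs_def] by measurable
  note mom = moments[where M=M and \<xi>=\<xi>, OF assms(1) rv ident mean var]
  have clt: "weak_conv_m (\<lambda>n. distr M borel (\<lambda>x. (\<Sum>i<n. \<xi> i x) / sqrt (real n * 1^2))) std_normal_distribution"
    by (rule P.central_limit_theorem_zero_mean[OF indep mom(2) zero_less_one mom(1) mom(3) ident])
  have F: "(\<lambda>n. P.prob {\<omega>\<in>space M. Z n \<omega> \<le> t}) \<longlonglongrightarrow> \<Phi> t" for t
  proof -
    from clt cont_Phi have "(\<lambda>n. cdf (distr M borel (Z n)) t) \<longlonglongrightarrow> \<Phi> t"
      unfolding weak_conv_m_def weak_conv_def \<Phi>_def Z_def[abs_def] S_def by simp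
    moreover have "cdf (distr M borel (Z n)) t = P.prob {\<omega>\<in>space M. Z n \<omega> \<le> t}" for n
      unfolding cdf_def by (subst measure_distr) (auto simp: vimage_def Int_def conj_commute)
    ultimately show ?thesis by simp
  qed
  have Fint: "P.prob {\<omega>\<in>space M. a < Z n \<omega> \<and> Z n \<omega> \<le> b} = 
     P.prob {\<omega>\<in>space M. Z n \<omega> \<le> b} - P.prob {\<omega>\<in>space M. Z n \<omega> \<le> a}" if "a \<le> b" for a b n
    by (rule Fint_gen[OF assms(1) _ that]) measurable
  have c_lim: "filterlim (\<lambda>n. c n / sqrt (real n)) at_top sequentially"
    unfolding c_def frak_a_def frak_b_def by real_asymp
  have x_lim: "(\<lambda>n. x / sqrt (real n)) \<longlonglongrightarrow> 0" by real_asymp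
  define g1 where "g1 n = P.prob {\<omega>\<in>space M. \<bar>S n \<omega>\<bar> \<le> x}" for n
  define g2 where "g2 n = P.prob {\<omega>\<in>space M. c n < \<bar>S n \<omega>\<bar>}" for n
  have absZ: "\<bar>S n \<omega>\<bar> = \<bar>Z n \<omega>\<bar> * sqrt (real n)" if "n > 0" for n \<omega>
    using that by (simp add: Z_def abs_mult)
  have g1: "g1 \<longlonglongrightarrow> 0"
  proof (rule lim0I)
    fix \<eta> :: real assume \<eta>: "\<eta> > 0"
    define \<epsilon> where "\<epsilon> m = inverse (real (Suc m))" for m
    have l\<epsilon>: "\<epsilon> \<longlonglongrightarrow> 0" unfolding \<epsilon>_def by (rule LIMSEQ_inverse_real_of_nat)
    have cP: "isCont \<Phi> t" for t unfolding \<Phi>_def by (rule cont_Phi)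
    have "(\<lambda>m. \<Phi> (\<epsilon> m) - \<Phi> (- \<epsilon> m)) \<longlonglongrightarrow> \<Phi> 0 - \<Phi> (- 0)"
      by (intro tendsto_diff isCont_tendsto_compose[OF cP] l\<epsilon> tendsto_minus)
    then have "eventually (\<lambda>m. \<Phi> (\<epsilon> m) - \<Phi> (- \<epsilon> m) < \<eta>/2) sequentially"
      using \<eta> by (intro order_tendstoD) auto
    then obtain m where m: "\<Phi> (\<epsilon> m) - \<Phi> (- \<epsilon> m) < \<eta>/2"
      by (auto simp: eventually_sequentially)
    define e where "e = \<epsilon> m"
    have e: "e > 0" unfolding e_def \<epsilon>_def by simp
    have "(\<lambda>n. P.prob {\<omega>\<in>space M. Z n \<omega> \<le> e} - P.prob {\<omega>\<in>space M. Z n \<omega> \<le> -e}) \<longlonglongrightarrow> \<Phi> e - \<Phi> (-e)"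
      by (intro tendsto_diff F)
    moreover have "\<Phi> e - \<Phi> (-e) < \<eta>" using m \<eta> by (simp add: e_def)
    ultimately have ev1: "eventually (\<lambda>n. P.prob {\<omega>\<in>space M. Z n \<omega> \<le> e} - P.prob {\<omega>\<in>space M. Z n \<omega> \<le> -e} < \<eta>) sequentially"
      by (rule order_tendstoD(2))
    have ev2: "eventually (\<lambda>n. x / sqrt (real n) < e) sequentially"
      using x_lim e by (intro order_tendstoD)
    have ev3: "eventually (\<lambda>n. n > 0) sequentially" by (rule eventually_gt_at_top)
    show "eventually (\<lambda>n. g1 n < \<eta>) sequentially"
      using ev1 ev2 ev3
    proof eventually_elim
      case (elim n)
      have sq: "sqrt (real n) > 0" using elim by simp
      have "g1 n \<le> P.prob {\<omega>\<in>space M. -e < Z n \<omega> \<and> Z n \<omega> \<le> e}"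
        unfolding g1_def
      proof (rule P.finite_measure_mono)
        show "{\<omega>\<in>space M. \<bar>S n \<omega>\<bar> \<le> x} \<subseteq> {\<omega>\<in>space M. -e < Z n \<omega> \<and> Z n \<omega> \<le> e}"
        proof safe
          fix \<omega> assume "\<omega>\<in>space M" "\<bar>S n \<omega>\<bar> \<le> x"
          then have "\<bar>Z n \<omega>\<bar> * sqrt (real n) \<le> x" using absZ elim by simp
          then have "\<bar>Z n \<omega>\<bar> \<le> x / sqrt (real n)" using sq by (simp add: pos_le_divide_eq)
          then show "-e < Z n \<omega>" "Z n \<omega> \<le> e" using elim by auto
        qed
      qed measurable
      also have "\<dots> = P.prob {\<omega>\<in>space M. Z n \<omega> \<le> e} - P.prob {\<omega>\<in>space M. Z n \<omega> \<le> -e}"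
        using e by (intro Fint) auto
      finally show ?case using elim by simp
    qed
  qed (simp add: g1_def)
  have g2: "g2 \<longlonglongrightarrow> 0"
  proof (rule lim0I)
    fix \<eta> :: real assume \<eta>: "\<eta> > 0"
    have fb: "finite_borel_measure std_normal_distribution"
      by (rule real_distribution.finite_borel_measure_M[OF real_dist_normal_dist])
    have "eventually (\<lambda>K. \<Phi> K > 1 - \<eta>/4) at_top"
      using real_distribution.cdf_lim_at_top_prob[OF real_dist_normal_dist] \<eta>
      unfolding \<Phi>_def by (intro order_tendstoD) auto
    moreover have "((\<lambda>K. \<Phi> (-K)) \<longlongrightarrow> 0) at_top"
      unfolding \<Phi>_def
      by (rule filterlim_compose[OF finite_borel_measure.cdf_lim_at_bot[OF fb] filterlim_uminus_at_bot_at_top])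
    then have "eventually (\<lambda>K. \<Phi> (-K) < \<eta>/4) at_top"
      using \<eta> by (intro order_tendstoD) auto
    ultimately have "eventually (\<lambda>K. \<Phi> K > 1 - \<eta>/4 \<and> \<Phi> (-K) < \<eta>/4 \<and> K \<ge> 0) at_top"
      by (intro eventually_conj eventually_ge_at_top)
    then obtain K where K: "\<Phi> K > 1 - \<eta>/4" "\<Phi> (-K) < \<eta>/4" "K \<ge> 0"
      by (metis (no_types, lifting) eventually_at_top_linorder order_refl)
    have ev1: "eventually (\<lambda>n. P.prob {\<omega>\<in>space M. Z n \<omega> \<le> K} > 1 - \<eta>/4) sequentially"
      by (rule order_tendstoD(1)[OF F K(1)])
    have ev2: "eventually (\<lambda>n. P.prob {\<omega>\<in>space M. Z n \<omega> \<le> -K} < \<eta>/4) sequentially"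
      by (rule order_tendstoD(2)[OF F K(2)])
    have ev3: "eventually (\<lambda>n. K < c n / sqrt (real n)) sequentially"
      using c_lim unfolding filterlim_at_top_dense by auto
    have ev4: "eventually (\<lambda>n. n > 0) sequentially" by (rule eventually_gt_at_top)
    show "eventually (\<lambda>n. g2 n < \<eta>) sequentially"
      using ev1 ev2 ev3 ev4
    proof eventually_elim
      case (elim n)
      have sq: "sqrt (real n) > 0" using elim by simp
      have "g2 n \<le> P.prob (space M - {\<omega>\<in>space M. -K < Z n \<omega> \<and> Z n \<omega> \<le> K})"
        unfolding g2_def
      proof (rule P.finite_measure_mono)
        show "{\<omega>\<in>space M. c n < \<bar>S n \<omega>\<bar>} \<subseteq> space M - {\<omega>\<in>space M. -K < Z n \<omega> \<and> Z n \<omega> \<le> K}"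
        proof safe
          fix \<omega> assume "\<omega>\<in>space M" "c n < \<bar>S n \<omega>\<bar>" "-K < Z n \<omega>" "Z n \<omega> \<le> K"
          then have "c n < \<bar>Z n \<omega>\<bar> * sqrt (real n)" using absZ elim by simp
          then have "c n / sqrt (real n) < \<bar>Z n \<omega>\<bar>" using sq by (simp add: divide_less_eq)
          then show False using elim \<open>-K < Z n \<omega>\<close> \<open>Z n \<omega> \<le> K\<close> by auto
        qed
      qed measurable
      also have "\<dots> = 1 - P.prob {\<omega>\<in>space M. -K < Z n \<omega> \<and> Z n \<omega> \<le> K}"
        by (rule P.prob_compl) measurable
      also have "\<dots> = 1 - (P.prob {\<omega>\<in>space M. Z n \<omega> \<le> K} - P.prob {\<omega>\<in>space M. Z n \<omega> \<le> -K})"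
        using K by (subst Fint) auto
      finally show ?case using elim \<eta> by linarith
    qed
  qed (simp add: g2_def)
  define A where "A n = {\<omega>\<in>space M. \<forall>k\<in>{1..n-1}. x < cmod (dft_coeff \<xi> n k \<omega>) \<and> cmod (dft_coeff \<xi> n k \<omega>) \<le> c n}" for n
  define B where "B n = {\<omega>\<in>space M. \<forall>k\<in>{0..n-1}. x < cmod (dft_coeff \<xi> n k \<omega>) \<and> cmod (dft_coeff \<xi> n k \<omega>) \<le> c n}" for n
  have "(\<lambda>n. \<bar>P.prob (A n) - P.prob (B n)\<bar>) \<longlonglongrightarrow> 0"
  proof (rule tendsto_sandwich[of "\<lambda>_. 0" _ _ "\<lambda>n. g1 n + g2 n"])
    show "eventually (\<lambda>n. 0 \<le> \<bar>P.prob (A n) - P.prob (B n)\<bar>) sequentially" by simp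
    show "eventually (\<lambda>n. \<bar>P.prob (A n) - P.prob (B n)\<bar> \<le> g1 n + g2 n) sequentially"
    proof (intro always_eventually allI)
      fix n
      have mA: "A n \<in> sets M" unfolding A_def by measurable
      have mB: "B n \<in> sets M" unfolding B_def by measurable
      have mD: "{\<omega>\<in>space M. \<bar>S n \<omega>\<bar> \<le> x} \<in> sets M" "{\<omega>\<in>space M. c n < \<bar>S n \<omega>\<bar>} \<in> sets M"
        by measurable
      have BA: "B n \<subseteq> A n" unfolding A_def B_def by auto
      have AB: "A n \<subseteq> B n \<union> ({\<omega>\<in>space M. \<bar>S n \<omega>\<bar> \<le> x} \<union> {\<omega>\<in>space M. c n < \<bar>S n \<omega>\<bar>})"
      proof
        fix \<omega> assume \<omega>: "\<omega> \<in> A n"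
        show "\<omega> \<in> B n \<union> ({\<omega>\<in>space M. \<bar>S n \<omega>\<bar> \<le> x} \<union> {\<omega>\<in>space M. c n < \<bar>S n \<omega>\<bar>})"
        proof (cases "x < \<bar>S n \<omega>\<bar> \<and> \<bar>S n \<omega>\<bar> \<le> c n")
          case True
          have sp: "\<omega> \<in> space M" using \<omega> unfolding A_def by auto
          have "\<forall>k\<in>{0..n-1}. x < cmod (dft_coeff \<xi> n k \<omega>) \<and> cmod (dft_coeff \<xi> n k \<omega>) \<le> c n"
          proof
            fix k assume k: "k \<in> {0..n-1}"
            show "x < cmod (dft_coeff \<xi> n k \<omega>) \<and> cmod (dft_coeff \<xi> n k \<omega>) \<le> c n"
            proof (cases "k = 0")
              case True
              then show ?thesis
                using \<open>x < \<bar>S n \<omega>\<bar> \<and> \<bar>S n \<omega>\<bar> \<le> c n\<close> by (simp add: dft0 S_def)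
            next
              case False
              then have "k \<in> {1..n-1}" using k by auto
              then show ?thesis using \<omega> unfolding A_def by auto
            qed
          qed
          then have "\<omega> \<in> B n" using sp unfolding B_def by simp
          then show ?thesis by simp
        next
          case False
          then show ?thesis using \<omega> unfolding A_def by auto
        qed
      qed
      have "P.prob (B n) \<le> P.prob (A n)" using BA mA by (intro P.finite_measure_mono)
      moreover have "P.prob (A n) \<le> P.prob (B n \<union> ({\<omega>\<in>space M. \<bar>S n \<omega>\<bar> \<le> x} \<union> {\<omega>\<in>space M. c n < \<bar>S n \<omega>\<bar>}))"
        using AB by (intro P.finite_measure_mono sets.Un mB mD)
      moreover have "\<dots> \<le> P.prob (B n) + P.prob ({\<omega>\<in>space M. \<bar>S n \<omega>\<bar> \<le> x} \<union> {\<omega>\<in>space M. c n < \<bar>S n \<omega>\<bar>})"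
        by (intro measure_Un_le sets.Un mB mD)
      moreover have "P.prob ({\<omega>\<in>space M. \<bar>S n \<omega>\<bar> \<le> x} \<union> {\<omega>\<in>space M. c n < \<bar>S n \<omega>\<bar>}) \<le> g1 n + g2 n"
        unfolding g1_def g2_def by (intro measure_Un_le mD)
      ultimately show "\<bar>P.prob (A n) - P.prob (B n)\<bar> \<le> g1 n + g2 n" by linarith
    qed
    show "(\<lambda>_. 0) \<longlonglongrightarrow> (0::real)" by simp
    show "(\<lambda>n. g1 n + g2 n) \<longlonglongrightarrow> 0" using tendsto_add[OF g1 g2] by simp
  qed
  then show ?thesis unfolding A_def B_def c_def .
qed
end
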